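(* Let $(\mathcal{C},\psi)$ be a t-pair and $j\in\{1,\dots,7\}$. Then $\operatorname{typ}_u(\mathcal{C},\psi)=t_j$ if and only if $\operatorname{typ}(\mathcal{C},\psi)=T_j$.
   Context: Let $\mathbb{N}=\{0,1,2,\dots\}$; for an integer $k\ge 2$ let $E_k=\{0,1,\dots,k-1\}$; let $\mathcal{P}(\mathbb{N})$ be the set of nonempty finite subsets of $\mathbb{N}$. Let $F$ be a nonempty set (of attribute names). A decision table $T\in\mathcal{M}_k(F)$ is a rectangular table with $n\ge 1$ columns labeled with attributes $f_1,\dots,f_n\in F$ (any two columns labeled with the same attribute are equal), whose rows are pairwise different tuples from $E_k^n$ (the set of rows may be empty), each row being labeled with a set of decisions from $\mathcal{P}(\mathbb{N})$. Write $At(T)=\{f_1,\dots,f_n\}$ and $\Delta(T)$ for the set of rows. For a word $\alpha=(f_{i_1},\delta_1)\cdots(f_{i_m},\delta_m)$ with $f_{i_j}\in At(T)$, $\delta_j\in E_k$, the subtable $T\alpha$ consists of the rows of $T$ having value $\delta_j$ in column $f_{i_j}$ for all $j$ ($T\lambda=T$ for the empty word $\lambda$). Operations on tables: (1) removal of a column from a table with at least two columns (if groups of equal rows appear, only the first row of each group, with its decision set, is kept); (2) changing of decisions: the decision sets attached to rows are replaced arbitrarily by sets from $\mathcal{P}(\mathbb{N})$; (3) permutation of columns: swap two columns together with their attribute labels; (4) duplication of columns: add a copy of a column (with its label) next to it. A set $\mathcal{C}\subseteq\mathcal{M}_k(F)$ is a closed class if every table obtained from a table of $\mathcal{C}$ by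 finitely many such operations belongs to $\mathcal{C}$. A decision tree over $\mathcal{M}_k(F)$ is a finite directed tree with a root (unique node with no entering edge) and at least two nodes such that the root and the edges leaving the root are unlabeled, each worker node (neither root nor terminal) is labeled with an attribute from $F$, each edge leaving a worker node is labeled with a number from $E_k$, and each terminal node is labeled with a number from $\mathbb{N}$. For a complete path $\xi$ (root to terminal node) whose worker nodes are labeled $f_{j_1},\dots,f_{j_m}$ in order, with the edges leaving them labeled $\delta_1,\dots,\delta_m$, put $\pi(\xi)=(f_{j_1},\delta_1)\cdots(f_{j_m},\delta_m)$, $\varphi(\xi)=f_{j_1}\cdots f_{j_m}$ (both empty if $m=0$), and let $\tau(\xi)$ be the label of its terminal node. A nondeterministic decision tree for $T$ is a decision tree $\Gamma$ whose worker-node attributes lie in $At(T)$, such that $\bigcup_{\xi}\Delta(T\pi(\xi))=\Delta(T)$ (union over complete paths), and for every row $r\in\Delta(T)$ and every complete path $\xi$ with $r\in\Delta(T\pi(\xi))$, $\tau(\xi)$ belongs to the decision set of $r$. A decision tree is deterministic if exactly one edge leaves the root and the edges leaving each worker node have pairwise different labels; a deterministic decision tree for $T$ is a deterministic decision tree that is a nondeterministic decision tree for $T$. A complexity measure over $\mathcal{M}_k(F)$ is any map $\psi:F^*\to\mathbb{N}$, where $F^*$ is the set of finite words over $F$ including the empty word $\lambda$. For a tree, $\psi(\Gamma)=\max_\xi\psi(\varphi(\xi))$ over complete paths. For $T$ with columns labeled $f_1,\dots,f_n$: $\psi^i(T)=\psi(f_1\cdots f_n)$, $\psi^d(T)$ is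 the minimum complexity of a deterministic decision tree for $T$, $\psi^a(T)$ the minimum complexity of a nondeterministic decision tree for $T$. A t-pair $(\mathcal{C},\psi)$ consists of a closed class $\mathcal{C}\subseteq\mathcal{M}_k(F)$ and a complexity measure $\psi$ over $\mathcal{M}_k(F)$. For $b,c\in\{i,d,a\}$ define partial functions $\mathcal{U}^{bc}_{\mathcal{C}\psi}(n)=\max\{\psi^b(T):T\in\mathcal{C},\psi^c(T)\le n\}$ (defined iff this set is nonempty and finite) and $\mathcal{L}^{bc}_{\mathcal{C}\psi}(n)=\min\{\psi^b(T):T\in\mathcal{C},\psi^c(T)\ge n\}$ (defined iff this set is nonempty). For a partial function $g:\mathbb{N}\to\mathbb{N}$ with domain $\mathrm{Dom}(g)$, let $\mathrm{Dom}^+(g)=\{n\in\mathrm{Dom}(g):g(n)\ge n\}$, $\mathrm{Dom}^-(g)=\{n\in\mathrm{Dom}(g):g(n)\le n\}$. Its type $\operatorname{typ}(g)$ is: $\alpha$ if $\mathrm{Dom}(g)$ is infinite and $g$ is bounded above; $\beta$ if $\mathrm{Dom}(g)$ is infinite, $\mathrm{Dom}^+(g)$ is finite and $g$ is unbounded above; $\gamma$ if $\mathrm{Dom}^+(g)$ and $\mathrm{Dom}^-(g)$ are both infinite; $\delta$ if $\mathrm{Dom}(g)$ is infinite and $\mathrm{Dom}^-(g)$ is finite; $\epsilon$ if $\mathrm{Dom}(g)$ is finite. The upper type $\operatorname{typ}_u(\mathcal{C},\psi)$ is the $3\times3$ table with rows and columns indexed by $i,d,a$ (in this order) with entry $\operatorname{typ}(\mathcal{U}^{bc}_{\mathcal{C}\psi})$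 in row $b$, column $c$; the type $\operatorname{typ}(\mathcal{C},\psi)$ is the analogous table with entry the pair $\operatorname{typ}(\mathcal{L}^{bc}_{\mathcal{C}\psi})\operatorname{typ}(\mathcal{U}^{bc}_{\mathcal{C}\psi})$. Row by row (rows $i,d,a$; entries in columns $i,d,a$): $t_1$: all entries $\alpha$. $t_2$: $(\gamma,\epsilon,\epsilon)$; $(\alpha,\alpha,\alpha)$; $(\alpha,\alpha,\alpha)$. $t_3$: $(\gamma,\epsilon,\epsilon)$; $(\beta,\gamma,\epsilon)$; $(\alpha,\alpha,\alpha)$. $t_4$: $(\gamma,\epsilon,\epsilon)$; $(\gamma,\gamma,\epsilon)$; $(\alpha,\alpha,\alpha)$. $t_5$: $(\gamma,\epsilon,\epsilon)$; $(\gamma,\gamma,\gamma)$; $(\gamma,\gamma,\gamma)$. $t_6$: $(\gamma,\epsilon,\epsilon)$; $(\gamma,\gamma,\delta)$; $(\gamma,\gamma,\gamma)$. $t_7$: $(\gamma,\epsilon,\epsilon)$; $(\gamma,\gamma,\epsilon)$; $(\gamma,\gamma,\gamma)$. $T_1$: all entries $\epsilon\alpha$. $T_2$: $(\gamma\gamma,\epsilon\epsilon,\epsilon\epsilon)$; $(\alpha\alpha,\epsilon\alpha,\epsilon\alpha)$; $(\alpha\alpha,\epsilon\alpha,\epsilon\alpha)$. $T_3$: $(\gamma\gamma,\delta\epsilon,\epsilon\epsilon)$; $(\alpha\beta,\gamma\gamma,\epsilon\epsilon)$; $(\alpha\alpha,\alpha\alpha,\epsilon\alpha)$. $T_4$: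 $(\gamma\gamma,\gamma\epsilon,\epsilon\epsilon)$; $(\alpha\gamma,\gamma\gamma,\epsilon\epsilon)$; $(\alpha\alpha,\alpha\alpha,\epsilon\alpha)$. $T_5$: $(\gamma\gamma,\gamma\epsilon,\gamma\epsilon)$; $(\alpha\gamma,\gamma\gamma,\gamma\gamma)$; $(\alpha\gamma,\gamma\gamma,\gamma\gamma)$. $T_6$: $(\gamma\gamma,\gamma\epsilon,\gamma\epsilon)$; $(\alpha\gamma,\gamma\gamma,\gamma\delta)$; $(\alpha\gamma,\beta\gamma,\gamma\gamma)$. $T_7$: $(\gamma\gamma,\gamma\epsilon,\gamma\epsilon)$; $(\alpha\gamma,\gamma\gamma,\gamma\epsilon)$; $(\alpha\gamma,\alpha\gamma,\gamma\gamma)$. *)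

theory Defs
  imports Main
begin

text \<open>A decision table is a pair (column labels, list of rows); a row is a pair
(tuple of values, decision set). The order of rows is kept (it matters for
the removal of columns, where the first row of each group is kept).\<close>

type_synonym 'f dtable = "'f list \<times> (nat list \<times> nat set) list"

definition cols :: "'f dtable \<Rightarrow> 'f list" where "cols T = fst T"
definition rows :: "'f dtable \<Rightarrow> (nat list \<times> nat set) list" where "rows T = snd T"

definition valid_table :: "nat \<Rightarrow> 'f dtable \<Rightarrow> bool" where
  "valid_table k T \<longleftrightarrow>
     cols T \<noteq> [] \<and>
     (\<forall>(r, D) \<in> set (rows T). length r = length (cols T) \<and> (\<forall>x \<in> set r. x < k)
         \<and> finite D \<and> D \<noteq> {}) \<and>
     distinct (map fst (rows T)) \<and>
     (\<forall>(r, D) \<in> set (rows T). \<forall>i < length (cols T). \<forall>j < length (cols T).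
         cols T ! i = cols T ! j \<longrightarrow> r ! i = r ! j)"

definition At :: "'f dtable \<Rightarrow> 'f set" where "At T = set (cols T)"

definition del_at :: "nat \<Rightarrow> 'a list \<Rightarrow> 'a list" where
  "del_at i xs = take i xs @ drop (Suc i) xs"

definition swap_at :: "nat \<Rightarrow> nat \<Rightarrow> 'a list \<Rightarrow> 'a list" where
  "swap_at i j xs = xs[i := xs ! j, j := xs ! i]"

definition dup_at :: "nat \<Rightarrow> 'a list \<Rightarrow> 'a list" where
  "dup_at i xs = take (Suc i) xs @ [xs ! i] @ drop (Suc i) xs"

definition keep_first :: "(nat list \<times> nat set) list \<Rightarrow> (nat list \<times> nat set) list" where
  "keep_first rs = [rs ! p. p \<leftarrow> [0..<length rs], \<forall>q < p. fst (rs ! q) \<noteq> fst (rs ! p)]"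

inductive table_op :: "'f dtable \<Rightarrow> 'f dtable \<Rightarrow> bool" where
  remove_col: "2 \<le> length cs \<Longrightarrow> i < length cs \<Longrightarrow>
     table_op (cs, rs) (del_at i cs, keep_first (map (\<lambda>(r, D). (del_at i r, D)) rs))"
| change_dec: "map fst rs' = map fst rs \<Longrightarrow> (\<forall>D \<in> snd ` set rs'. finite D \<and> D \<noteq> {}) \<Longrightarrow>
     table_op (cs, rs) (cs, rs')"
| permute: "i < length cs \<Longrightarrow> j < length cs \<Longrightarrow>
     table_op (cs, rs) (swap_at i j cs, map (\<lambda>(r, D). (swap_at i j r, D)) rs)"
| duplicate: "i < length cs \<Longrightarrow>
     table_op (cs, rs) (dup_at i cs, map (\<lambda>(r, D). (dup_at i r, D)) rs)"

definition closed_class :: "nat \<Rightarrow> 'f dtable set \<Rightarrow> bool" where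
  "closed_class k C \<longleftrightarrow> C \<subseteq> {T. valid_table k T} \<and>
     (\<forall>T \<in> C. \<forall>T'. table_op\<^sup>*\<^sup>* T T' \<longrightarrow> T' \<in> C)"

definition row_in_sub :: "'f dtable \<Rightarrow> ('f \<times> nat) list \<Rightarrow> nat list \<Rightarrow> bool" where
  "row_in_sub T \<alpha> r \<longleftrightarrow>
     (\<forall>(f, \<delta>) \<in> set \<alpha>. \<exists>i < length (cols T). cols T ! i = f \<and> r ! i = \<delta>)"

text \<open>A node below the root: a terminal node labelled by a number, or a worker node
labelled by an attribute with a list of outgoing (edge label, subtree) pairs.
A decision tree is the (nonempty) list of subtrees hanging at the unlabelled root.\<close>

datatype 'f dnode = Leaf nat | Node 'f "(nat \<times> 'f dnode) list"

type_synonym 'f dtree = "'f dnode list"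

inductive wf_node :: "nat \<Rightarrow> 'f set \<Rightarrow> bool \<Rightarrow> 'f dnode \<Rightarrow> bool" for k A det where
  "wf_node k A det (Leaf d)"
| "f \<in> A \<Longrightarrow> cs \<noteq> [] \<Longrightarrow> (det \<longrightarrow> distinct (map fst cs)) \<Longrightarrow>
   (\<forall>p \<in> set cs. fst p < k \<and> wf_node k A det (snd p)) \<Longrightarrow> wf_node k A det (Node f cs)"

definition wf_tree :: "nat \<Rightarrow> 'f set \<Rightarrow> bool \<Rightarrow> 'f dtree \<Rightarrow> bool" where
  "wf_tree k A det \<Gamma> \<longleftrightarrow> \<Gamma> \<noteq> [] \<and> (det \<longrightarrow> length \<Gamma> = 1) \<and> (\<forall>c \<in> set \<Gamma>. wf_node k A det c)"

inductive node_path :: "'f dnode \<Rightarrow> ('f \<times> nat) list \<Rightarrow> nat \<Rightarrow> bool" where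
  "node_path (Leaf d) [] d"
| "(\<delta>, c) \<in> set cs \<Longrightarrow> node_path c w t \<Longrightarrow> node_path (Node f cs) ((f, \<delta>) # w) t"

definition complete_path :: "'f dtree \<Rightarrow> ('f \<times> nat) list \<Rightarrow> nat \<Rightarrow> bool" where
  "complete_path \<Gamma> w t \<longleftrightarrow> (\<exists>c \<in> set \<Gamma>. node_path c w t)"

definition nondet_tree_for :: "nat \<Rightarrow> 'f dtable \<Rightarrow> 'f dtree \<Rightarrow> bool" where
  "nondet_tree_for k T \<Gamma> \<longleftrightarrow> wf_tree k (At T) False \<Gamma> \<and>
     (\<forall>(r, D) \<in> set (rows T). \<exists>w t. complete_path \<Gamma> w t \<and> row_in_sub T w r) \<and>
     (\<forall>(r, D) \<in> set (rows T). \<forall>w t. complete_path \<Gamma> w t \<and> row_in_sub T w r \<longrightarrow> t \<in> D)"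

definition det_tree_for :: "nat \<Rightarrow> 'f dtable \<Rightarrow> 'f dtree \<Rightarrow> bool" where
  "det_tree_for k T \<Gamma> \<longleftrightarrow> wf_tree k (At T) True \<Gamma> \<and> nondet_tree_for k T \<Gamma>"

definition tree_cx :: "('f list \<Rightarrow> nat) \<Rightarrow> 'f dtree \<Rightarrow> nat" where
  "tree_cx \<psi> \<Gamma> = Max {\<psi> (map fst w) | w t. complete_path \<Gamma> w t}"

datatype cm = I | D | A

definition cx :: "nat \<Rightarrow> ('f list \<Rightarrow> nat) \<Rightarrow> cm \<Rightarrow> 'f dtable \<Rightarrow> nat" where
  "cx k \<psi> b T = (case b of
      I \<Rightarrow> \<psi> (cols T)
    | D \<Rightarrow> (LEAST n. \<exists>\<Gamma>. det_tree_for k T \<Gamma> \<and> tree_cx \<psi> \<Gamma> = n)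
    | A \<Rightarrow> (LEAST n. \<exists>\<Gamma>. nondet_tree_for k T \<Gamma> \<and> tree_cx \<psi> \<Gamma> = n))"

definition U_fun :: "nat \<Rightarrow> 'f dtable set \<Rightarrow> ('f list \<Rightarrow> nat) \<Rightarrow> cm \<Rightarrow> cm \<Rightarrow> nat \<Rightarrow> nat option" where
  "U_fun k C \<psi> b c n =
     (let S = {cx k \<psi> b T | T. T \<in> C \<and> cx k \<psi> c T \<le> n}
      in if S \<noteq> {} \<and> finite S then Some (Max S) else None)"

definition L_fun :: "nat \<Rightarrow> 'f dtable set \<Rightarrow> ('f list \<Rightarrow> nat) \<Rightarrow> cm \<Rightarrow> cm \<Rightarrow> nat \<Rightarrow> nat option" where
  "L_fun k C \<psi> b c n =
     (let S = {cx k \<psi> b T | T. T \<in> C \<and> cx k \<psi> c T \<ge> n}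
      in if S \<noteq> {} then Some (LEAST m. m \<in> S) else None)"

datatype ty = T\<alpha> | T\<beta> | T\<gamma> | T\<delta> | T\<epsilon>

definition Dom :: "(nat \<Rightarrow> nat option) \<Rightarrow> nat set" where
  "Dom g = {n. g n \<noteq> None}"
definition Dom_plus :: "(nat \<Rightarrow> nat option) \<Rightarrow> nat set" where
  "Dom_plus g = {n \<in> Dom g. the (g n) \<ge> n}"
definition Dom_minus :: "(nat \<Rightarrow> nat option) \<Rightarrow> nat set" where
  "Dom_minus g = {n \<in> Dom g. the (g n) \<le> n}"
definition bounded_above :: "(nat \<Rightarrow> nat option) \<Rightarrow> bool" where
  "bounded_above g \<longleftrightarrow> (\<exists>B. \<forall>n \<in> Dom g. the (g n) \<le> B)"

definition has_typ :: "(nat \<Rightarrow> nat option) \<Rightarrow> ty \<Rightarrow> bool" where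
  "has_typ g t \<longleftrightarrow> (case t of
      T\<alpha> \<Rightarrow> infinite (Dom g) \<and> bounded_above g
    | T\<beta> \<Rightarrow> infinite (Dom g) \<and> finite (Dom_plus g) \<and> \<not> bounded_above g
    | T\<gamma> \<Rightarrow> infinite (Dom_plus g) \<and> infinite (Dom_minus g)
    | T\<delta> \<Rightarrow> infinite (Dom g) \<and> finite (Dom_minus g)
    | T\<epsilon> \<Rightarrow> finite (Dom g))"

definition typ_of :: "(nat \<Rightarrow> nat option) \<Rightarrow> ty" where
  "typ_of g = (THE t. has_typ g t)"

definition typ_u :: "nat \<Rightarrow> 'f dtable set \<Rightarrow> ('f list \<Rightarrow> nat) \<Rightarrow> cm \<Rightarrow> cm \<Rightarrow> ty" where
  "typ_u k C \<psi> b c = typ_of (U_fun k C \<psi> b c)"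

definition typ_full :: "nat \<Rightarrow> 'f dtable set \<Rightarrow> ('f list \<Rightarrow> nat) \<Rightarrow> cm \<Rightarrow> cm \<Rightarrow> ty \<times> ty" where
  "typ_full k C \<psi> b c = (typ_of (L_fun k C \<psi> b c), typ_of (U_fun k C \<psi> b c))"

definition mk3 :: "'a \<times> 'a \<times> 'a \<Rightarrow> 'a \<times> 'a \<times> 'a \<Rightarrow> 'a \<times> 'a \<times> 'a \<Rightarrow> cm \<Rightarrow> cm \<Rightarrow> 'a" where
  "mk3 ri rd ra b c =
     (let r = (case b of I \<Rightarrow> ri | D \<Rightarrow> rd | A \<Rightarrow> ra) in
      case c of I \<Rightarrow> fst r | D \<Rightarrow> fst (snd r) | A \<Rightarrow> snd (snd r))"

definition tt :: "nat \<Rightarrow> cm \<Rightarrow> cm \<Rightarrow> ty" where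
  "tt j = (if j = 1 then mk3 (T\<alpha>, T\<alpha>, T\<alpha>) (T\<alpha>, T\<alpha>, T\<alpha>) (T\<alpha>, T\<alpha>, T\<alpha>)
    else if j = 2 then mk3 (T\<gamma>, T\<epsilon>, T\<epsilon>) (T\<alpha>, T\<alpha>, T\<alpha>) (T\<alpha>, T\<alpha>, T\<alpha>)
    else if j = 3 then mk3 (T\<gamma>, T\<epsilon>, T\<epsilon>) (T\<beta>, T\<gamma>, T\<epsilon>) (T\<alpha>, T\<alpha>, T\<alpha>)
    else if j = 4 then mk3 (T\<gamma>, T\<epsilon>, T\<epsilon>) (T\<gamma>, T\<gamma>, T\<epsilon>) (T\<alpha>, T\<alpha>, T\<alpha>)
    else if j = 5 then mk3 (T\<gamma>, T\<epsilon>, T\<epsilon>) (T\<gamma>, T\<gamma>, T\<gamma>) (T\<gamma>, T\<gamma>, T\<gamma>)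
    else if j = 6 then mk3 (T\<gamma>, T\<epsilon>, T\<epsilon>) (T\<gamma>, T\<gamma>, T\<delta>) (T\<gamma>, T\<gamma>, T\<gamma>)
    else mk3 (T\<gamma>, T\<epsilon>, T\<epsilon>) (T\<gamma>, T\<gamma>, T\<epsilon>) (T\<gamma>, T\<gamma>, T\<gamma>))"

definition TT :: "nat \<Rightarrow> cm \<Rightarrow> cm \<Rightarrow> ty \<times> ty" where
  "TT j = (if j = 1 then
      mk3 ((T\<epsilon>,T\<alpha>), (T\<epsilon>,T\<alpha>), (T\<epsilon>,T\<alpha>)) ((T\<epsilon>,T\<alpha>), (T\<epsilon>,T\<alpha>), (T\<epsilon>,T\<alpha>)) ((T\<epsilon>,T\<alpha>), (T\<epsilon>,T\<alpha>), (T\<epsilon>,T\<alpha>))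
    else if j = 2 then
      mk3 ((T\<gamma>,T\<gamma>), (T\<epsilon>,T\<epsilon>), (T\<epsilon>,T\<epsilon>)) ((T\<alpha>,T\<alpha>), (T\<epsilon>,T\<alpha>), (T\<epsilon>,T\<alpha>)) ((T\<alpha>,T\<alpha>), (T\<epsilon>,T\<alpha>), (T\<epsilon>,T\<alpha>))
    else if j = 3 then
      mk3 ((T\<gamma>,T\<gamma>), (T\<delta>,T\<epsilon>), (T\<epsilon>,T\<epsilon>)) ((T\<alpha>,T\<beta>), (T\<gamma>,T\<gamma>), (T\<epsilon>,T\<epsilon>)) ((T\<alpha>,T\<alpha>), (T\<alpha>,T\<alpha>), (T\<epsilon>,T\<alpha>))
    else if j = 4 then
      mk3 ((T\<gamma>,T\<gamma>), (T\<gamma>,T\<epsilon>), (T\<epsilon>,T\<epsilon>)) ((T\<alpha>,T\<gamma>), (T\<gamma>,T\<gamma>), (T\<epsilon>,T\<epsilon>)) ((T\<alpha>,T\<alpha>), (T\<alpha>,T\<alpha>), (T\<epsilon>,T\<alpha>))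
    else if j = 5 then
      mk3 ((T\<gamma>,T\<gamma>), (T\<gamma>,T\<epsilon>), (T\<gamma>,T\<epsilon>)) ((T\<alpha>,T\<gamma>), (T\<gamma>,T\<gamma>), (T\<gamma>,T\<gamma>)) ((T\<alpha>,T\<gamma>), (T\<gamma>,T\<gamma>), (T\<gamma>,T\<gamma>))
    else if j = 6 then
      mk3 ((T\<gamma>,T\<gamma>), (T\<gamma>,T\<epsilon>), (T\<gamma>,T\<epsilon>)) ((T\<alpha>,T\<gamma>), (T\<gamma>,T\<gamma>), (T\<gamma>,T\<delta>)) ((T\<alpha>,T\<gamma>), (T\<beta>,T\<gamma>), (T\<gamma>,T\<gamma>))
    else
      mk3 ((T\<gamma>,T\<gamma>), (T\<gamma>,T\<epsilon>), (T\<gamma>,T\<epsilon>)) ((T\<alpha>,T\<gamma>), (T\<gamma>,T\<gamma>), (T\<gamma>,T\<epsilon>)) ((T\<alpha>,T\<gamma>), (T\<alpha>,T\<gamma>), (T\<gamma>,T\<gamma>)))"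

end

theory Submission imports Defs begin

definition bnd :: "'x set \<Rightarrow> ('x \<Rightarrow> nat) \<Rightarrow> bool" where
  "bnd C g \<longleftrightarrow> (\<exists>B. \<forall>T\<in>C. g T \<le> B)"
definition EE :: "'x set \<Rightarrow> ('x \<Rightarrow> nat) \<Rightarrow> ('x \<Rightarrow> nat) \<Rightarrow> nat set" where
  "EE C g h = {n. \<exists>T\<in>C. g T = n \<and> h T = n}"
definition Uf :: "'x set \<Rightarrow> ('x \<Rightarrow> nat) \<Rightarrow> ('x \<Rightarrow> nat) \<Rightarrow> nat \<Rightarrow> nat option" where
  "Uf C g h n = (let S = {g T | T. T \<in> C \<and> h T \<le> n}
      in if S \<noteq> {} \<and> finite S then Some (Max S) else None)"
definition Lf :: "'x set \<Rightarrow> ('x \<Rightarrow> nat) \<Rightarrow> ('x \<Rightarrow> nat) \<Rightarrow> nat \<Rightarrow> nat option" where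
  "Lf C g h n = (let S = {g T | T. T \<in> C \<and> h T \<ge> n}
      in if S \<noteq> {} then Some (LEAST m. m \<in> S) else None)"

lemma Dom_pm: "Dom g = Dom_plus g \<union> Dom_minus g"
  by (auto simp: Dom_def Dom_plus_def Dom_minus_def)
lemma Dom_plus_sub: "Dom_plus g \<subseteq> Dom g" by (auto simp: Dom_def Dom_plus_def)
lemma Dom_minus_sub: "Dom_minus g \<subseteq> Dom g" by (auto simp: Dom_def Dom_minus_def)

lemma bounded_fin_plus: "bounded_above g \<Longrightarrow> finite (Dom_plus g)"
proof -
  assume "bounded_above g"
  then obtain B where B: "\<forall>n\<in>Dom g. the (g n) \<le> B" by (auto simp: bounded_above_def)
  have "Dom_plus g \<subseteq> {..B}" using B by (auto simp: Dom_plus_def)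
  then show ?thesis using finite_subset by blast
qed

lemma has_typ_unique: "has_typ g t \<Longrightarrow> has_typ g t' \<Longrightarrow> t = t'"
proof -
  assume a: "has_typ g t" "has_typ g t'"
  have u: "finite (Dom_plus g) \<Longrightarrow> finite (Dom_minus g) \<Longrightarrow> finite (Dom g)"
    using Dom_pm by (metis finite_UnI)
  have p: "infinite (Dom_plus g) \<Longrightarrow> infinite (Dom g)" using Dom_plus_sub finite_subset by blast
  have m: "infinite (Dom_minus g) \<Longrightarrow> infinite (Dom g)" using Dom_minus_sub finite_subset by blast
  show ?thesis using a u p m bounded_fin_plus[of g]
    by (cases t; cases t'; simp add: has_typ_def; blast)
qed

lemma has_typ_ex: "\<exists>t. has_typ g t"
proof (cases "finite (Dom g)")
  case True then show ?thesis by (auto simp: has_typ_def intro: exI[of _ T\<epsilon>])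
next
  case inf: False
  show ?thesis
  proof (cases "bounded_above g")
    case True then show ?thesis using inf by (auto simp: has_typ_def intro!: exI[of _ T\<alpha>])
  next
    case nb: False
    show ?thesis
    proof (cases "finite (Dom_plus g)")
      case True then show ?thesis using inf nb by (auto simp: has_typ_def intro!: exI[of _ T\<beta>])
    next
      case False
      show ?thesis
      proof (cases "finite (Dom_minus g)")
        case True then show ?thesis using inf by (auto simp: has_typ_def intro!: exI[of _ T\<delta>])
      next
        case False2: False then show ?thesis using False by (auto simp: has_typ_def intro!: exI[of _ T\<gamma>])
      qed
    qed
  qed
qed

lemma typ_of_eq: "has_typ g t \<Longrightarrow> typ_of g = t"
  unfolding typ_of_def by (metis the_equality has_typ_unique)

lemma has_typ_typ_of: "has_typ g (typ_of g)"
  using has_typ_ex typ_of_eq by metis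

lemma not_bnd_ex: "\<not> bnd C h \<Longrightarrow> \<exists>T\<in>C. n < h T"
  unfolding bnd_def by (meson not_le)

lemma not_bnd_inf: "\<not> bnd C g \<Longrightarrow> infinite (g ` C)"
  unfolding bnd_def using finite_nat_set_iff_bounded_le by auto

lemma EE_diag: "EE C g g = g ` C" by (auto simp: EE_def)
lemma EE_sym: "EE C g h = EE C h g" by (auto simp: EE_def)

lemma Uf_empty: "typ_of (Uf {} g h) = T\<epsilon>"
proof -
  have "Uf {} g h = (\<lambda>n. None)" by (auto simp: Uf_def)
  then have "Dom (Uf {} g h) = {}" by (simp add: Dom_def)
  then show ?thesis by (intro typ_of_eq) (simp add: has_typ_def)
qed

lemma Uf_fin: fixes g h :: "'x \<Rightarrow> nat" assumes "\<forall>T\<in>C. g T \<le> h T" shows "finite {g T | T. T \<in> C \<and> h T \<le> n}"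
proof (rule finite_subset[of _ "{..n}"])
  have "g T \<le> n" if "T \<in> C" "h T \<le> n" for T
  proof -
    have "g T \<le> h T" using assms that(1) by blast
    then show ?thesis using that(2) by linarith
  qed
  then show "{g T | T. T \<in> C \<and> h T \<le> n} \<subseteq> {..n}" by blast
qed simp

lemma Uf_Dom_plus: assumes "\<forall>T\<in>C. g T \<le> h T" shows "Dom_plus (Uf C g h) = EE C g h"
proof -
  have "n \<in> Dom_plus (Uf C g h) \<longleftrightarrow> n \<in> EE C g h" for n
  proof -
    let ?S = "{g T | T. T \<in> C \<and> h T \<le> n}"
    have f: "finite ?S" using Uf_fin[OF assms] .
    have "n \<in> Dom_plus (Uf C g h) \<longleftrightarrow> ?S \<noteq> {} \<and> n \<le> Max ?S"
      by (auto simp: Dom_plus_def Dom_def Uf_def Let_def f)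
    also have "\<dots> \<longleftrightarrow> (\<exists>x\<in>?S. n \<le> x)"
    proof
      assume "?S \<noteq> {} \<and> n \<le> Max ?S" then show "\<exists>x\<in>?S. n \<le> x" using f Max_in by blast
    next
      assume "\<exists>x\<in>?S. n \<le> x"
      then obtain x where x: "x \<in> ?S" "n \<le> x" by blast
      then have "x \<le> Max ?S" using f Max_ge by blast
      then show "?S \<noteq> {} \<and> n \<le> Max ?S" using x by auto
    qed
    also have "\<dots> \<longleftrightarrow> n \<in> EE C g h"
    proof
      assume "\<exists>x\<in>?S. n \<le> x"
      then obtain T where "T \<in> C" "h T \<le> n" "n \<le> g T" by blast
      moreover then have "g T \<le> h T" using assms by blast
      ultimately show "n \<in> EE C g h" unfolding EE_def by (intro CollectI bexI[of _ T]) auto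
    next
      assume "n \<in> EE C g h"
      then obtain T where T: "T \<in> C" "g T = n" "h T = n" unfolding EE_def by blast
      then have "g T \<in> ?S" by auto
      then show "\<exists>x\<in>?S. n \<le> x" using T(2) by (intro bexI[of _ "g T"]) auto
    qed
    finally show ?thesis .
  qed
  then show ?thesis by blast
qed

lemma Uf_Dom_minus: assumes "\<forall>T\<in>C. g T \<le> h T" shows "Dom_minus (Uf C g h) = Dom (Uf C g h)"
proof -
  have "n \<in> Dom (Uf C g h) \<Longrightarrow> n \<in> Dom_minus (Uf C g h)" for n
  proof -
    let ?S = "{g T | T. T \<in> C \<and> h T \<le> n}"
    have f: "finite ?S" using Uf_fin[OF assms] .
    assume "n \<in> Dom (Uf C g h)"
    then have ne: "?S \<noteq> {}" by (auto simp: Dom_def Uf_def Let_def split: if_splits)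
    have "Max ?S \<le> n" using f ne assms by (auto simp: Max_le_iff)
    then show ?thesis using ne f by (auto simp: Dom_minus_def Dom_def Uf_def Let_def)
  qed
  then show ?thesis using Dom_minus_sub by blast
qed

lemma Uf_Dom_inf: assumes "C \<noteq> {}" "\<forall>T\<in>C. g T \<le> h T" shows "infinite (Dom (Uf C g h))"
proof -
  obtain T0 where T0: "T0 \<in> C" using assms by auto
  have "n \<in> Dom (Uf C g h)" if "h T0 \<le> n" for n
    using that T0 Uf_fin[OF assms(2), of n] by (auto simp: Dom_def Uf_def Let_def)
  then show ?thesis unfolding finite_nat_set_iff_bounded_le
    by (metis Suc_n_not_le_n nat_le_linear order.trans)
qed

lemma Uf_diag: assumes "C \<noteq> {}" shows "typ_of (Uf C g g) = (if bnd C g then T\<alpha> else T\<gamma>)"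
proof (cases "bnd C g")
  case True
  then obtain B where B: "\<forall>T\<in>C. g T \<le> B" by (auto simp: bnd_def)
  have "bounded_above (Uf C g g)"
    unfolding bounded_above_def
  proof (intro exI[of _ B] ballI)
    fix n assume "n \<in> Dom (Uf C g g)"
    then have ne: "{g T | T. T \<in> C \<and> g T \<le> n} \<noteq> {}" by (auto simp: Dom_def Uf_def Let_def split: if_splits)
    show "the (Uf C g g n) \<le> B" using ne B Uf_fin[of C g g n] by (auto simp: Uf_def Let_def Max_le_iff)
  qed
  then show ?thesis using True Uf_Dom_inf[OF assms, of g g]
    by (auto intro!: typ_of_eq simp: has_typ_def)
next
  case False
  have "infinite (Dom_plus (Uf C g g))" using Uf_Dom_plus[of C g g] EE_diag[of C g] not_bnd_inf[OF False] by simp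
  moreover then have "infinite (Dom_minus (Uf C g g))" using Uf_Dom_minus[of C g g] Dom_plus_sub
    by (metis finite_subset order_refl)
  ultimately show ?thesis using False by (auto intro!: typ_of_eq simp: has_typ_def)
qed

lemma Uf_le_E:
  assumes "\<forall>T\<in>C. g T \<le> h T"
  shows "typ_of (Uf C g h) = T\<beta> \<Longrightarrow> finite (EE C g h)"
    and "typ_of (Uf C g h) = T\<gamma> \<Longrightarrow> infinite (EE C g h)"
  using has_typ_typ_of[of "Uf C g h"] Uf_Dom_plus[OF assms] by (auto simp: has_typ_def)

lemma Lf_Dom: "Dom (Lf C g h) = {n. \<exists>T\<in>C. n \<le> h T}"
  by (auto simp: Dom_def Lf_def Let_def)

lemma Lf_bnd: "bnd C h \<Longrightarrow> typ_of (Lf C g h) = T\<epsilon>"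
proof -
  assume "bnd C h"
  then obtain B where B: "\<forall>T\<in>C. h T \<le> B" by (auto simp: bnd_def)
  have "Dom (Lf C g h) \<subseteq> {..B}" using B by (auto simp: Lf_Dom)
  then have "finite (Dom (Lf C g h))" using finite_subset by blast
  then show ?thesis by (intro typ_of_eq) (simp add: has_typ_def)
qed

lemma Lf_Dom_UNIV: "\<not> bnd C h \<Longrightarrow> Dom (Lf C g h) = UNIV"
proof -
  assume a: "\<not> bnd C h"
  have "n \<in> Dom (Lf C g h)" for n
  proof -
    obtain T where "T \<in> C" "n < h T" using not_bnd_ex[OF a] by blast
    then show ?thesis unfolding Lf_Dom by (intro CollectI bexI[of _ T]) auto
  qed
  then show ?thesis by blast
qed

lemma Lf_some: "\<not> bnd C h \<Longrightarrow> Lf C g h n = Some (LEAST m. m \<in> {g T | T. T \<in> C \<and> h T \<ge> n})"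
  using not_bnd_ex[of C h n] by (auto simp: Lf_def Let_def)

lemma Lf_ge:
  assumes "\<forall>T\<in>C. h T \<le> g T"
  shows "Dom_plus (Lf C g h) = Dom (Lf C g h)" and "Dom_minus (Lf C g h) = EE C g h"
proof -
  have "n \<in> Dom_plus (Lf C g h) \<and> (n \<in> Dom_minus (Lf C g h) \<longleftrightarrow> n \<in> EE C g h)"
    if "n \<in> Dom (Lf C g h)" for n
  proof -
    let ?S = "{g T | T. T \<in> C \<and> h T \<ge> n}"
    have ne: "?S \<noteq> {}" using that by (auto simp: Dom_def Lf_def Let_def split: if_splits)
    then have L: "Lf C g h n = Some (LEAST m. m \<in> ?S)" by (simp add: Lf_def)
    obtain x0 where "x0 \<in> ?S" using ne by blast
    then have LS: "(LEAST m. m \<in> ?S) \<in> ?S" by (rule LeastI)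
    have ge: "n \<le> (LEAST m. m \<in> ?S)" using LS assms by auto
    have "(LEAST m. m \<in> ?S) \<le> n \<longleftrightarrow> (\<exists>x\<in>?S. x \<le> n)"
    proof
      assume "(LEAST m. m \<in> ?S) \<le> n" then show "\<exists>x\<in>?S. x \<le> n" using LS by blast
    next
      assume "\<exists>x\<in>?S. x \<le> n"
      then obtain x where "x \<in> ?S" "x \<le> n" by blast
      then show "(LEAST m. m \<in> ?S) \<le> n" using Least_le[of "\<lambda>m. m \<in> ?S" x] by linarith
    qed
    also have "\<dots> \<longleftrightarrow> n \<in> EE C g h"
    proof
      assume "\<exists>x\<in>?S. x \<le> n"
      then obtain T where "T \<in> C" "n \<le> h T" "g T \<le> n" by blast
      moreover then have "h T \<le> g T" using assms by blast
      ultimately show "n \<in> EE C g h" unfolding EE_def by (intro CollectI bexI[of _ T]) auto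
    next
      assume "n \<in> EE C g h"
      then obtain T where T: "T \<in> C" "g T = n" "h T = n" unfolding EE_def by blast
      then have "g T \<in> ?S" by auto
      then show "\<exists>x\<in>?S. x \<le> n" using T(2) by (intro bexI[of _ "g T"]) auto
    qed
    finally have eq: "(LEAST m. m \<in> ?S) \<le> n \<longleftrightarrow> n \<in> EE C g h" .
    have "n \<in> Dom_plus (Lf C g h)" using ge that L by (simp add: Dom_plus_def)
    moreover have "n \<in> Dom_minus (Lf C g h) \<longleftrightarrow> (LEAST m. m \<in> ?S) \<le> n"
      using that L by (simp add: Dom_minus_def)
    ultimately show ?thesis using eq by blast
  qed
  note P = this
  have E: "EE C g h \<subseteq> Dom (Lf C g h)"
  proof
    fix n assume "n \<in> EE C g h"
    then obtain T where "T \<in> C" "h T = n" unfolding EE_def by blast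
    then show "n \<in> Dom (Lf C g h)" unfolding Lf_Dom by (intro CollectI bexI[of _ T]) auto
  qed
  show "Dom_plus (Lf C g h) = Dom (Lf C g h)"
    using P Dom_plus_sub[of "Lf C g h"] by (intro equalityI subsetI) auto
  show "Dom_minus (Lf C g h) = EE C g h"
  proof (intro equalityI subsetI)
    fix n assume "n \<in> Dom_minus (Lf C g h)"
    then show "n \<in> EE C g h" using P Dom_minus_sub[of "Lf C g h"] by blast
  next
    fix n assume "n \<in> EE C g h"
    then show "n \<in> Dom_minus (Lf C g h)" using P E by blast
  qed
qed

lemma Lf_ge_typ:
  assumes "\<forall>T\<in>C. h T \<le> g T" "\<not> bnd C h"
  shows "typ_of (Lf C g h) = (if finite (EE C g h) then T\<delta> else T\<gamma>)"
  using Lf_ge[OF assms(1)] Lf_Dom_UNIV[OF assms(2), of g]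
  by (auto intro!: typ_of_eq simp: has_typ_def)

lemma Lf_diag: "typ_of (Lf C g g) = (if bnd C g then T\<epsilon> else T\<gamma>)"
  using Lf_bnd[of C g g] Lf_ge_typ[of C g g] not_bnd_inf[of C g] EE_diag[of C g] by auto

lemma Lf_alpha:
  assumes "\<not> bnd C h" "\<forall>n. \<exists>T\<in>C. n \<le> h T \<and> g T \<le> B"
  shows "typ_of (Lf C g h) = T\<alpha>"
proof -
  have "bounded_above (Lf C g h)"
    unfolding bounded_above_def
  proof (intro exI[of _ B] ballI)
    fix n
    obtain T where T: "T \<in> C" "n \<le> h T" "g T \<le> B" using assms(2) by blast
    have "(LEAST m. m \<in> {g T | T. T \<in> C \<and> h T \<ge> n}) \<le> g T" using T by (intro Least_le) auto
    then show "the (Lf C g h n) \<le> B" using T Lf_some[OF assms(1)] by auto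
  qed
  then show ?thesis using Lf_Dom_UNIV[OF assms(1)] by (auto intro!: typ_of_eq simp: has_typ_def)
qed


lemma Lf_alpha_bnd: "bnd C g \<Longrightarrow> \<not> bnd C h \<Longrightarrow> typ_of (Lf C g h) = T\<alpha>"
proof -
  assume a: "bnd C g" "\<not> bnd C h"
  then obtain B where B: "\<forall>T\<in>C. g T \<le> B" by (auto simp: bnd_def)
  have "\<forall>n. \<exists>T\<in>C. n \<le> h T \<and> g T \<le> B"
  proof
    fix n obtain T where "T \<in> C" "n < h T" using not_bnd_ex[OF a(2)] by blast
    then show "\<exists>T\<in>C. n \<le> h T \<and> g T \<le> B" using B by (intro bexI[of _ T]) auto
  qed
  then show ?thesis using Lf_alpha[OF a(2)] by blast
qed

lemma Lf_ad:
  assumes ne: "C \<noteq> {}" and le: "\<forall>T\<in>C. g T \<le> h T" and nbg: "\<not> bnd C g"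
  shows "typ_of (Uf C h g) = T\<gamma> \<Longrightarrow> typ_of (Lf C g h) = T\<gamma>"
    and "typ_of (Uf C h g) = T\<delta> \<Longrightarrow> typ_of (Lf C g h) = T\<beta>"
    and "typ_of (Uf C h g) = T\<epsilon> \<Longrightarrow> typ_of (Lf C g h) = T\<alpha>"
proof -
  define P where "P m \<longleftrightarrow> (\<forall>T\<in>C. g T \<le> m \<longrightarrow> h T \<le> m)" for m
  obtain T0 where T0: "T0 \<in> C" using ne by blast
  have nbh: "\<not> bnd C h"
  proof
    assume "bnd C h"
    then obtain B where "\<forall>T\<in>C. h T \<le> B" by (auto simp: bnd_def)
    then have "\<forall>T\<in>C. g T \<le> B" using le by (meson le_trans)
    then show False using nbg by (auto simp: bnd_def)
  qed
  have domL: "Dom (Lf C g h) = UNIV" using Lf_Dom_UNIV[OF nbh] .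
  let ?S = "\<lambda>n. {g T | T. T \<in> C \<and> h T \<ge> n}"
  have LS: "Lf C g h n = Some (LEAST m. m \<in> ?S n)" for n using Lf_some[OF nbh] .
  have Lin: "(LEAST m. m \<in> ?S n) \<in> ?S n" for n
  proof -
    obtain T where "T \<in> C" "n < h T" using not_bnd_ex[OF nbh] by blast
    then have "g T \<in> ?S n" by auto
    then show ?thesis by (rule LeastI)
  qed
  have minus: "g ` C \<subseteq> Dom_minus (Lf C g h)"
  proof
    fix x assume "x \<in> g ` C"
    then obtain T where T: "T \<in> C" "x = g T" by blast
    then have "g T \<in> ?S x" using le by auto
    then have "(LEAST m. m \<in> ?S x) \<le> g T" by (rule Least_le)
    then show "x \<in> Dom_minus (Lf C g h)" using T domL LS by (simp add: Dom_minus_def)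
  qed
  have infminus: "infinite (Dom_minus (Lf C g h))"
    using minus not_bnd_inf[OF nbg] finite_subset by blast
  have plus_sub: "Dom_plus (Lf C g h) \<subseteq> insert 0 (Suc ` {m. P m})"
  proof
    fix n assume n: "n \<in> Dom_plus (Lf C g h)"
    show "n \<in> insert 0 (Suc ` {m. P m})"
    proof (cases n)
      case 0 then show ?thesis by simp
    next
      case (Suc m)
      have ge: "n \<le> (LEAST m. m \<in> ?S n)" using n LS by (simp add: Dom_plus_def)
      have "P m" unfolding P_def
      proof (intro ballI impI)
        fix T assume T: "T \<in> C" "g T \<le> m"
        show "h T \<le> m"
        proof (rule ccontr)
          assume "\<not> h T \<le> m"
          then have "g T \<in> ?S n" using T Suc by auto
          then have "(LEAST m. m \<in> ?S n) \<le> g T" by (rule Least_le)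
          then show False using ge T Suc by linarith
        qed
      qed
      then show ?thesis using Suc by blast
    qed
  qed
  have plus_sup: "Suc ` {m. P m} \<subseteq> Dom_plus (Lf C g h)"
  proof
    fix n assume "n \<in> Suc ` {m. P m}"
    then obtain m where m: "P m" "n = Suc m" by blast
    obtain T where T: "T \<in> C" "(LEAST m. m \<in> ?S n) = g T" "n \<le> h T" using Lin[of n] by auto
    have "\<not> g T \<le> m" using m T unfolding P_def by auto
    then have "n \<le> (LEAST m. m \<in> ?S n)" using T m by linarith
    then show "n \<in> Dom_plus (Lf C g h)" using LS domL by (simp add: Dom_plus_def)
  qed
  let ?S' = "\<lambda>m. {h T | T. T \<in> C \<and> g T \<le> m}"
  have Uminus1: "Dom_minus (Uf C h g) \<subseteq> {m. P m}"
  proof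
    fix m assume m: "m \<in> Dom_minus (Uf C h g)"
    then have ne': "?S' m \<noteq> {}" and f': "finite (?S' m)" and mx: "Max (?S' m) \<le> m"
      by (auto simp: Dom_minus_def Dom_def Uf_def Let_def split: if_splits)
    have "P m" unfolding P_def
    proof (intro ballI impI)
      fix T assume "T \<in> C" "g T \<le> m"
      then have "h T \<in> ?S' m" by auto
      then have "h T \<le> Max (?S' m)" by (rule Max_ge[OF f'])
      then show "h T \<le> m" using mx by linarith
    qed
    then show "m \<in> {m. P m}" by simp
  qed
  have Uminus2: "{m. P m} \<subseteq> Dom_minus (Uf C h g) \<union> {..< g T0}"
  proof
    fix m assume "m \<in> {m. P m}"
    then have Pm: "P m" by simp
    show "m \<in> Dom_minus (Uf C h g) \<union> {..< g T0}"
    proof (cases "g T0 \<le> m")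
      case True
      have ne': "?S' m \<noteq> {}" using True T0 by auto
      have sub: "?S' m \<subseteq> {..m}" using Pm unfolding P_def by auto
      then have f': "finite (?S' m)" using finite_subset by blast
      have "Max (?S' m) \<le> m" using sub ne' f' by (meson Max_in atMost_iff subsetD)
      then have "m \<in> Dom_minus (Uf C h g)" using ne' f'
        by (simp add: Dom_minus_def Dom_def Uf_def Let_def)
      then show ?thesis by blast
    next
      case False then show ?thesis by simp
    qed
  qed
  show "typ_of (Uf C h g) = T\<gamma> \<Longrightarrow> typ_of (Lf C g h) = T\<gamma>"
  proof -
    assume "typ_of (Uf C h g) = T\<gamma>"
    then have "infinite (Dom_minus (Uf C h g))"
      using has_typ_typ_of[of "Uf C h g"] by (simp add: has_typ_def)
    then have "infinite {m. P m}" using Uminus1 finite_subset by blast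
    then have "infinite (Suc ` {m. P m})" using finite_imageD inj_Suc by blast
    then have "infinite (Dom_plus (Lf C g h))" using plus_sup finite_subset by blast
    then show ?thesis using infminus by (intro typ_of_eq) (simp add: has_typ_def)
  qed
  show "typ_of (Uf C h g) = T\<delta> \<Longrightarrow> typ_of (Lf C g h) = T\<beta>"
  proof -
    assume "typ_of (Uf C h g) = T\<delta>"
    then have fm: "finite (Dom_minus (Uf C h g))" and idu: "infinite (Dom (Uf C h g))"
      using has_typ_typ_of[of "Uf C h g"] by (simp_all add: has_typ_def)
    have "finite {m. P m}" using Uminus2 fm finite_subset by blast
    then have fp: "finite (Dom_plus (Lf C g h))" using plus_sub finite_subset by blast
    have nb: "\<not> bounded_above (Lf C g h)"
    proof
      assume "bounded_above (Lf C g h)"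
      then obtain B where B: "\<forall>n. (LEAST m. m \<in> ?S n) \<le> B"
        using domL LS by (auto simp: bounded_above_def)
      obtain m where m: "m \<ge> B" "m \<in> Dom (Uf C h g)"
        using idu unfolding finite_nat_set_iff_bounded_le by (meson nat_le_linear)
      then have ne': "?S' m \<noteq> {}" and f': "finite (?S' m)"
        by (auto simp: Dom_def Uf_def Let_def split: if_splits)
      define M where "M = Max (?S' m)"
      obtain T where T: "T \<in> C" "(LEAST m. m \<in> ?S (Suc M)) = g T" "Suc M \<le> h T"
        using Lin[of "Suc M"] by auto
      have "g T \<le> m" using B[rule_format, of "Suc M"] T m by linarith
      then have "h T \<in> ?S' m" using T by auto
      then have "h T \<le> M" unfolding M_def by (rule Max_ge[OF f'])
      then show False using T by linarith
    qed
    show ?thesis using fp nb domL by (intro typ_of_eq) (simp add: has_typ_def)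
  qed
  show "typ_of (Uf C h g) = T\<epsilon> \<Longrightarrow> typ_of (Lf C g h) = T\<alpha>"
  proof -
    assume "typ_of (Uf C h g) = T\<epsilon>"
    then have fd: "finite (Dom (Uf C h g))"
      using has_typ_typ_of[of "Uf C h g"] by (simp add: has_typ_def)
    define m where "m = Suc (Max (insert (g T0) (Dom (Uf C h g))))"
    have mge: "g T0 \<le> m" unfolding m_def using fd by (simp add: le_SucI)
    have "m \<notin> Dom (Uf C h g)"
    proof
      assume "m \<in> Dom (Uf C h g)"
      then have "m \<le> Max (insert (g T0) (Dom (Uf C h g)))" using fd by simp
      then show False unfolding m_def by simp
    qed
    moreover have ne': "?S' m \<noteq> {}" using mge T0 by auto
    ultimately have inf': "infinite (?S' m)" by (auto simp: Dom_def Uf_def Let_def split: if_splits)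
    have "\<forall>n. \<exists>T\<in>C. n \<le> h T \<and> g T \<le> m"
    proof
      fix n
      obtain x where "x \<in> ?S' m" "n \<le> x" using inf' unfolding finite_nat_set_iff_bounded_le
        by (meson nat_le_linear)
      then show "\<exists>T\<in>C. n \<le> h T \<and> g T \<le> m" by auto
    qed
    then show ?thesis using Lf_alpha[OF nbh] by blast
  qed
qed


fun full :: "nat \<Rightarrow> (nat list \<Rightarrow> nat) \<Rightarrow> 'f list \<Rightarrow> nat list \<Rightarrow> 'f dnode" where
  "full k dec [] pre = Leaf (dec pre)"
| "full k dec (f # fs) pre = Node f (map (\<lambda>\<delta>. (\<delta>, full k dec fs (pre @ [\<delta>]))) [0..<k])"

inductive_cases np_leaf: "node_path (Leaf d) w t"
inductive_cases np_node: "node_path (Node f cs) w t"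

lemma full_path: "node_path (full k dec fs pre) w t \<Longrightarrow>
  map fst w = fs \<and> (\<forall>x\<in>set (map snd w). x < k) \<and> t = dec (pre @ map snd w)"
proof (induction fs arbitrary: pre w t)
  case Nil
  then show ?case by (auto elim: np_leaf)
next
  case (Cons f fs)
  from Cons.prems obtain \<delta> c w' where w: "w = (f, \<delta>) # w'"
    and dc: "(\<delta>, c) \<in> set (map (\<lambda>\<delta>. (\<delta>, full k dec fs (pre @ [\<delta>]))) [0..<k])"
    and np: "node_path c w' t"
    by (auto elim: np_node)
  from dc have dk: "\<delta> < k" and c: "c = full k dec fs (pre @ [\<delta>])" by auto
  from Cons.IH[of "pre @ [\<delta>]" w' t] np c have
    "map fst w' = fs \<and> (\<forall>x\<in>set (map snd w'). x < k) \<and> t = dec ((pre @ [\<delta>]) @ map snd w')" by simp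
  then show ?case using w dk by simp
qed

lemma full_path_ex: "length v = length fs \<Longrightarrow> \<forall>x\<in>set v. x < k \<Longrightarrow>
  node_path (full k dec fs pre) (zip fs v) (dec (pre @ v))"
proof (induction fs arbitrary: pre v)
  case Nil
  then show ?case by (simp add: node_path.intros(1))
next
  case (Cons f fs)
  then obtain \<delta> v' where v: "v = \<delta> # v'" by (cases v) auto
  have dk: "\<delta> < k" using Cons.prems v by simp
  have "node_path (full k dec fs (pre @ [\<delta>])) (zip fs v') (dec ((pre @ [\<delta>]) @ v'))"
    using Cons.IH[of v' "pre @ [\<delta>]"] Cons.prems v by simp
  moreover have "(\<delta>, full k dec fs (pre @ [\<delta>])) \<in> set (map (\<lambda>\<delta>. (\<delta>, full k dec fs (pre @ [\<delta>]))) [0..<k])"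
    using dk by auto
  ultimately have "node_path (Node f (map (\<lambda>\<delta>. (\<delta>, full k dec fs (pre @ [\<delta>]))) [0..<k])) ((f, \<delta>) # zip fs v') (dec ((pre @ [\<delta>]) @ v'))"
    by (metis node_path.intros(2))
  then show ?case using v by simp
qed

lemma full_wf: "0 < k \<Longrightarrow> set fs \<subseteq> As \<Longrightarrow> wf_node k As det (full k dec fs pre)"
proof (induction fs arbitrary: pre)
  case Nil
  then show ?case by (simp add: wf_node.intros(1))
next
  case (Cons f fs)
  have "map fst (map (\<lambda>\<delta>. (\<delta>, full k dec fs (pre @ [\<delta>]))) [0..<k]) = [0..<k]"
    by (simp add: o_def)
  then show ?case using Cons by (auto intro!: wf_node.intros(2))
qed

lemma valid_row:
  assumes "valid_table k T" "(r, Ds) \<in> set (rows T)"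
  shows "length r = length (cols T)" "\<forall>x\<in>set r. x < k" "finite Ds" "Ds \<noteq> {}"
    "\<And>i j. i < length (cols T) \<Longrightarrow> j < length (cols T) \<Longrightarrow> cols T ! i = cols T ! j \<Longrightarrow> r ! i = r ! j"
proof -
  have 1: "\<forall>(r, D) \<in> set (rows T). length r = length (cols T) \<and> (\<forall>x \<in> set r. x < k) \<and> finite D \<and> D \<noteq> {}"
    using conjunct1[OF conjunct2[OF assms(1)[unfolded valid_table_def]]] .
  have 2: "\<forall>(r, D) \<in> set (rows T). \<forall>i < length (cols T). \<forall>j < length (cols T). cols T ! i = cols T ! j \<longrightarrow> r ! i = r ! j"
    using conjunct2[OF conjunct2[OF conjunct2[OF assms(1)[unfolded valid_table_def]]]] .
  from bspec[OF 1 assms(2)] show "length r = length (cols T)" "\<forall>x\<in>set r. x < k" "finite Ds" "Ds \<noteq> {}" by simp_all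
  have 3: "\<forall>i < length (cols T). \<forall>j < length (cols T). cols T ! i = cols T ! j \<longrightarrow> r ! i = r ! j"
    using bspec[OF 2 assms(2)] by (simp only: prod.case)
  show "\<And>i j. i < length (cols T) \<Longrightarrow> j < length (cols T) \<Longrightarrow> cols T ! i = cols T ! j \<Longrightarrow> r ! i = r ! j"
    using 3 by blast
qed

lemma valid_dist: "valid_table k T \<Longrightarrow> distinct (map fst (rows T))"
  by (drule iffD1[OF valid_table_def]) (drule conjunct2, drule conjunct2, erule conjunct1)

lemma row_sub_iff:
  assumes v: "valid_table k T" and r: "(r, Ds) \<in> set (rows T)" and w: "map fst w = cols T"
  shows "row_in_sub T w r \<longleftrightarrow> r = map snd w"
proof -
  have lr: "length r = length (cols T)" using valid_row[OF v r] by blast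
  have cons: "\<And>i j. i < length (cols T) \<Longrightarrow> j < length (cols T) \<Longrightarrow> cols T ! i = cols T ! j \<Longrightarrow> r ! i = r ! j"
    using valid_row(5)[OF v r] by blast
  have lw: "length w = length (cols T)" using w by (metis length_map)
  have fw: "fst (w ! i) = cols T ! i" if "i < length w" for i using w that by (metis nth_map)
  show ?thesis
  proof
    assume a: "row_in_sub T w r"
    show "r = map snd w"
    proof (rule nth_equalityI)
      show "length r = length (map snd w)" using lr lw by simp
      fix j assume j: "j < length r"
      have "(cols T ! j, snd (w ! j)) \<in> set w" using j lr lw fw
        by (metis nth_mem prod.collapse)
      then obtain i where i: "i < length (cols T)" "cols T ! i = cols T ! j" "r ! i = snd (w ! j)"
        using a unfolding row_in_sub_def by fastforce
      have "r ! i = r ! j" using cons[OF i(1) _ i(2)] j lr by simp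
      then show "r ! j = map snd w ! j" using i j lr lw by simp
    qed
  next
    assume a: "r = map snd w"
    show "row_in_sub T w r"
      unfolding row_in_sub_def
    proof (intro ballI, clarify)
      fix f \<delta> assume "(f, \<delta>) \<in> set w"
      then obtain i where i: "i < length w" "w ! i = (f, \<delta>)" by (metis in_set_conv_nth)
      then show "\<exists>i<length (cols T). cols T ! i = f \<and> r ! i = \<delta>"
        using fw[OF i(1)] a lw by (intro exI[of _ i]) auto
    qed
  qed
qed

definition dch :: "'f dtable \<Rightarrow> nat list \<Rightarrow> nat" where
  "dch T v = (case map_of (rows T) v of Some Ds \<Rightarrow> (SOME d. d \<in> Ds) | None \<Rightarrow> 0)"

lemma dec_in: assumes "valid_table k T" "(r, Ds) \<in> set (rows T)" shows "dch T r \<in> Ds"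
proof -
  have "map_of (rows T) r = Some Ds" using valid_dist[OF assms(1)] assms(2) by simp
  moreover have "Ds \<noteq> {}" using valid_row[OF assms] by blast
  ultimately show ?thesis unfolding dch_def by (auto intro: someI_ex)
qed

lemma cp_single: "complete_path [c] w t \<longleftrightarrow> node_path c w t"
  by (simp add: complete_path_def)

lemma full_tree:
  assumes v: "valid_table k T" and k: "0 < k"
  shows "det_tree_for k T [full k (dch T) (cols T) []]"
    and "tree_cx \<psi> [full k (dch T) (cols T) []] = \<psi> (cols T)"
proof -
  let ?G = "[full k (dch T) (cols T) []]"
  have wf: "wf_tree k (At T) det ?G" for det
    using full_wf[OF k, of "cols T" "At T"] by (simp add: wf_tree_def At_def)
  have cover: "\<forall>(r, Ds) \<in> set (rows T). \<exists>w t. complete_path ?G w t \<and> row_in_sub T w r"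
  proof (clarify)
    fix r Ds assume r: "(r, Ds) \<in> set (rows T)"
    have lr: "length r = length (cols T)" and rk: "\<forall>x\<in>set r. x < k"
      using valid_row[OF v r] by blast+
    have "complete_path ?G (zip (cols T) r) (dch T ([] @ r))"
      using full_path_ex[OF lr rk, where dec = "dch T" and pre = "[]"] by (simp add: cp_single)
    moreover have "row_in_sub T (zip (cols T) r) r"
      using row_sub_iff[OF v r] lr by simp
    ultimately show "\<exists>w t. complete_path ?G w t \<and> row_in_sub T w r" by blast
  qed
  have decs: "\<forall>(r, Ds) \<in> set (rows T). \<forall>w t. complete_path ?G w t \<and> row_in_sub T w r \<longrightarrow> t \<in> Ds"
  proof (clarify)
    fix r Ds w t assume r: "(r, Ds) \<in> set (rows T)" and cp: "complete_path ?G w t"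
      and rs: "row_in_sub T w r"
    from cp have p: "map fst w = cols T" "t = dch T ([] @ map snd w)"
      using full_path by (fastforce simp: cp_single)+
    then have "r = map snd w" using row_sub_iff[OF v r] rs by blast
    then show "t \<in> Ds" using p dec_in[OF v r] by simp
  qed
  show "det_tree_for k T ?G"
    using wf cover decs by (simp add: det_tree_for_def nondet_tree_for_def)
  have "{\<psi> (map fst w) | w t. complete_path ?G w t} = {\<psi> (cols T)}"
  proof
    show "{\<psi> (map fst w) | w t. complete_path ?G w t} \<subseteq> {\<psi> (cols T)}"
      using full_path by (fastforce simp: cp_single)
    have "complete_path ?G (zip (cols T) (replicate (length (cols T)) 0)) (dch T ([] @ replicate (length (cols T)) 0))"
      using full_path_ex[of "replicate (length (cols T)) 0" "cols T" k "dch T" "[]"] k by (simp add: cp_single)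
    moreover have "map fst (zip (cols T) (replicate (length (cols T)) 0)) = cols T" by simp
    ultimately have "\<exists>w t. \<psi> (cols T) = \<psi> (map fst w) \<and> complete_path ?G w t"
      by metis
    then have "\<psi> (cols T) \<in> {\<psi> (map fst w) | w t. complete_path ?G w t}" by simp
    then show "{\<psi> (cols T)} \<subseteq> {\<psi> (map fst w) | w t. complete_path ?G w t}" by blast
  qed
  then show "tree_cx \<psi> ?G = \<psi> (cols T)" by (simp add: tree_cx_def)
qed

lemma cx_le:
  assumes v: "valid_table k T" and k: "0 < k"
  shows "cx k \<psi> A T \<le> cx k \<psi> D T" and "cx k \<psi> D T \<le> cx k \<psi> I T"
proof -
  have ex: "\<exists>\<Gamma>. det_tree_for k T \<Gamma> \<and> tree_cx \<psi> \<Gamma> = \<psi> (cols T)"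
    using full_tree[OF v k] by blast
  then show "cx k \<psi> D T \<le> cx k \<psi> I T" unfolding cx_def by (auto intro: Least_le)
  from ex have "\<exists>\<Gamma>. det_tree_for k T \<Gamma> \<and> tree_cx \<psi> \<Gamma> = cx k \<psi> D T"
    unfolding cx_def by (auto intro: LeastI)
  then obtain \<Gamma> where "det_tree_for k T \<Gamma>" "tree_cx \<psi> \<Gamma> = cx k \<psi> D T" by blast
  then have "nondet_tree_for k T \<Gamma>" "tree_cx \<psi> \<Gamma> = cx k \<psi> D T" by (auto simp: det_tree_for_def)
  then show "cx k \<psi> A T \<le> cx k \<psi> D T" unfolding cx_def by (auto intro: Least_le)
qed

lemma trick:
  assumes cc: "closed_class k C" and T: "T \<in> C"
  shows "\<exists>T'\<in>C. cx k \<psi> I T' = cx k \<psi> I T \<and> cx k \<psi> D T' \<le> \<psi> [] \<and> cx k \<psi> A T' \<le> \<psi> []"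
proof -
  obtain cs rs where Tcr: "T = (cs, rs)" by (cases T)
  define T' where "T' = (cs, map (\<lambda>(r, Ds). (r, {0::nat})) rs)"
  have "map fst (map (\<lambda>(r, Ds). (r, {0::nat})) rs) = map fst rs" by (induction rs) auto
  moreover have "\<forall>Ds \<in> snd ` set (map (\<lambda>(r, Ds). (r, {0::nat})) rs). finite Ds \<and> Ds \<noteq> {}" by auto
  ultimately have "table_op T T'" unfolding Tcr T'_def by (rule table_op.change_dec)
  then have T'C: "T' \<in> C" using cc T unfolding closed_class_def by blast
  have np0: "node_path (Leaf 0) w t \<longleftrightarrow> w = [] \<and> t = 0" for w t
    by (auto elim: np_leaf intro: node_path.intros(1))
  have wf: "wf_tree k (At T') det [Leaf 0]" for det
    by (simp add: wf_tree_def wf_node.intros(1))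
  have rowsT': "\<forall>(r, Ds) \<in> set (rows T'). Ds = {0}" by (auto simp: T'_def rows_def)
  have nd: "nondet_tree_for k T' [Leaf 0]" "det_tree_for k T' [Leaf 0]"
    using wf rowsT' by (auto simp: det_tree_for_def nondet_tree_for_def cp_single np0 row_in_sub_def)
  have "{\<psi> (map fst w) | w t. complete_path [Leaf 0] w t} = {\<psi> []}"
    by (auto simp: cp_single np0)
  then have cx0: "tree_cx \<psi> [Leaf 0] = \<psi> []" by (simp add: tree_cx_def)
  have "cx k \<psi> D T' \<le> \<psi> []" unfolding cx_def using nd cx0 by (auto intro: Least_le)
  moreover have "cx k \<psi> A T' \<le> \<psi> []" unfolding cx_def using nd cx0 by (auto intro: Least_le)
  moreover have "cx k \<psi> I T' = cx k \<psi> I T" by (simp add: cx_def T'_def Tcr cols_def)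
  ultimately show ?thesis using T'C by blast
qed


lemma U_eq: "U_fun k C \<psi> b c = Uf C (cx k \<psi> b) (cx k \<psi> c)"
  by (rule ext) (simp add: U_fun_def Uf_def)
lemma L_eq: "L_fun k C \<psi> b c = Lf C (cx k \<psi> b) (cx k \<psi> c)"
  by (rule ext) (simp add: L_fun_def Lf_def)

lemma sndTT: "snd (TT j b c) = tt j b c"
  by (cases b; cases c; simp add: TT_def tt_def mk3_def)

theorem corollary3:
  fixes k :: nat and C :: "'f dtable set" and \<psi> :: "'f list \<Rightarrow> nat" and j :: nat
  assumes "2 \<le> k" and "closed_class k C" and "j \<in> {1..7}"
  shows "typ_u k C \<psi> = tt j \<longleftrightarrow> typ_full k C \<psi> = TT j"
proof -
  have j7: "j = 1 \<or> j = 2 \<or> j = 3 \<or> j = 4 \<or> j = 5 \<or> j = 6 \<or> j = 7" using assms(3) by auto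
  have k0: "0 < k" using assms(1) by simp
  have valid: "\<forall>T\<in>C. valid_table k T" using assms(2) by (auto simp: closed_class_def)
  have le1: "\<forall>T\<in>C. cx k \<psi> A T \<le> cx k \<psi> D T" using valid cx_le(1)[OF _ k0] by blast
  have le2: "\<forall>T\<in>C. cx k \<psi> D T \<le> cx k \<psi> I T" using valid cx_le(2)[OF _ k0] by blast
  have le3: "\<forall>T\<in>C. cx k \<psi> A T \<le> cx k \<psi> I T" using le1 le2 le_trans by blast
  have typu: "typ_u k C \<psi> b c = typ_of (Uf C (cx k \<psi> b) (cx k \<psi> c))" for b c
    by (simp add: typ_u_def U_eq)
  have typf: "typ_full k C \<psi> b c = (typ_of (Lf C (cx k \<psi> b) (cx k \<psi> c)), typ_of (Uf C (cx k \<psi> b) (cx k \<psi> c)))" for b c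
    by (simp add: typ_full_def U_eq L_eq)
  have trickB: "\<not> bnd C (cx k \<psi> I) \<Longrightarrow> \<forall>n. \<exists>T\<in>C. n \<le> cx k \<psi> I T \<and> cx k \<psi> b T \<le> \<psi> []"
    if "b \<in> {D, A}" for b
  proof (intro allI)
    fix n assume nb: "\<not> bnd C (cx k \<psi> I)"
    obtain T where T: "T \<in> C" "n < cx k \<psi> I T" using not_bnd_ex[OF nb] by blast
    obtain T' where "T' \<in> C" "cx k \<psi> I T' = cx k \<psi> I T" "cx k \<psi> D T' \<le> \<psi> []" "cx k \<psi> A T' \<le> \<psi> []"
      using trick[OF assms(2) T(1)] by blast
    then show "\<exists>T\<in>C. n \<le> cx k \<psi> I T \<and> cx k \<psi> b T \<le> \<psi> []" using T that by (intro bexI[of _ T']) auto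
  qed
  show ?thesis
  proof
    assume H: "typ_u k C \<psi> = tt j"
    have U: "typ_of (Uf C (cx k \<psi> b) (cx k \<psi> c)) = tt j b c" for b c
      using H typu[of b c] by simp
    have Cne: "C \<noteq> {}"
    proof
      assume "C = {}"
      then have "typ_of (Uf C (cx k \<psi> I) (cx k \<psi> I)) = T\<epsilon>" by (simp add: Uf_empty)
      then show False using U[of I I] j7 by (auto simp: tt_def mk3_def)
    qed
    have bnd_iff: "bnd C (cx k \<psi> b) \<longleftrightarrow> tt j b b = T\<alpha>" for b
      using Uf_diag[OF Cne, of "cx k \<psi> b"] U[of b b] by (auto split: if_splits)
    have LII: "typ_of (Lf C (cx k \<psi> b) (cx k \<psi> b)) = (if tt j b b = T\<alpha> then T\<epsilon> else T\<gamma>)" for b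
      using Lf_diag[of C "cx k \<psi> b"] bnd_iff[of b] by simp
    have LID: "typ_of (Lf C (cx k \<psi> I) (cx k \<psi> D)) = (if tt j D D = T\<alpha> then T\<epsilon> else if tt j D I = T\<beta> then T\<delta> else T\<gamma>)"
    proof (cases "bnd C (cx k \<psi> D)")
      case True then show ?thesis using Lf_bnd bnd_iff by auto
    next
      case False
      then have a: "tt j D D \<noteq> T\<alpha>" using bnd_iff by auto
      then have b: "tt j D I = T\<beta> \<or> tt j D I = T\<gamma>" using j7 by (auto simp: tt_def mk3_def)
      have "typ_of (Lf C (cx k \<psi> I) (cx k \<psi> D)) = (if finite (EE C (cx k \<psi> I) (cx k \<psi> D)) then T\<delta> else T\<gamma>)"
        using Lf_ge_typ[OF le2 False] .
      moreover have "finite (EE C (cx k \<psi> I) (cx k \<psi> D)) \<longleftrightarrow> tt j D I = T\<beta>"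
        using b Uf_le_E[OF le2] U[of D I] EE_sym[of C "cx k \<psi> I" "cx k \<psi> D"] by auto
      ultimately show ?thesis using a by simp
    qed
    have LxA: "typ_of (Lf C (cx k \<psi> b) (cx k \<psi> A)) = (if tt j A A = T\<alpha> then T\<epsilon> else T\<gamma>)"
      if "b \<in> {I, D}" for b
    proof (cases "bnd C (cx k \<psi> A)")
      case True then show ?thesis using Lf_bnd bnd_iff by auto
    next
      case False
      then have a: "tt j A A \<noteq> T\<alpha>" using bnd_iff by auto
      then have b: "tt j A b = T\<gamma>" using j7 that by (auto simp: tt_def mk3_def)
      have le: "\<forall>T\<in>C. cx k \<psi> A T \<le> cx k \<psi> b T" using that le1 le3 by auto
      have "typ_of (Lf C (cx k \<psi> b) (cx k \<psi> A)) = (if finite (EE C (cx k \<psi> b) (cx k \<psi> A)) then T\<delta> else T\<gamma>)"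
        using Lf_ge_typ[OF le False] .
      moreover have "infinite (EE C (cx k \<psi> b) (cx k \<psi> A))"
        using b Uf_le_E(2)[OF le] U[of A b] EE_sym[of C "cx k \<psi> b" "cx k \<psi> A"] by auto
      ultimately show ?thesis using a by simp
    qed
    have LxI: "typ_of (Lf C (cx k \<psi> b) (cx k \<psi> I)) = (if tt j I I = T\<alpha> then T\<epsilon> else T\<alpha>)"
      if "b \<in> {D, A}" for b
    proof (cases "bnd C (cx k \<psi> I)")
      case True then show ?thesis using Lf_bnd bnd_iff by auto
    next
      case False
      then show ?thesis using Lf_alpha[OF False trickB[OF that False]] bnd_iff by auto
    qed
    have LAD: "typ_of (Lf C (cx k \<psi> A) (cx k \<psi> D)) = (if tt j D D = T\<alpha> then T\<epsilon> else if tt j A A = T\<alpha> then T\<alpha>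
        else if tt j D A = T\<gamma> then T\<gamma> else if tt j D A = T\<delta> then T\<beta> else T\<alpha>)"
    proof (cases "bnd C (cx k \<psi> D)")
      case True then show ?thesis using Lf_bnd bnd_iff by auto
    next
      case nd: False
      show ?thesis
      proof (cases "bnd C (cx k \<psi> A)")
        case True then show ?thesis using Lf_alpha_bnd[OF True nd] bnd_iff nd by auto
      next
        case False
        then have a: "tt j A A \<noteq> T\<alpha>" "tt j D D \<noteq> T\<alpha>" using bnd_iff nd by auto
        then have b: "tt j D A = T\<gamma> \<or> tt j D A = T\<delta> \<or> tt j D A = T\<epsilon>" using j7 by (auto simp: tt_def mk3_def)
        have u: "typ_of (Uf C (cx k \<psi> D) (cx k \<psi> A)) = tt j D A" using U[of D A] .
        from b show ?thesis
        proof (elim disjE)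
          assume e: "tt j D A = T\<gamma>"
          have "typ_of (Lf C (cx k \<psi> A) (cx k \<psi> D)) = T\<gamma>" using Lf_ad(1)[OF Cne le1 False] u e by simp
          then show ?thesis using a e by simp
        next
          assume e: "tt j D A = T\<delta>"
          have "typ_of (Lf C (cx k \<psi> A) (cx k \<psi> D)) = T\<beta>" using Lf_ad(2)[OF Cne le1 False] u e by simp
          then show ?thesis using a e by simp
        next
          assume e: "tt j D A = T\<epsilon>"
          have "typ_of (Lf C (cx k \<psi> A) (cx k \<psi> D)) = T\<alpha>" using Lf_ad(3)[OF Cne le1 False] u e by simp
          then show ?thesis using a e by simp
        qed
      qed
    qed
    have "typ_full k C \<psi> b c = TT j b c" for b c
    proof -
      have "fst (TT j b c) = typ_of (Lf C (cx k \<psi> b) (cx k \<psi> c))"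
      proof (cases b; cases c)
        assume h: "b = I" "c = I" show ?thesis unfolding h LII using j7 by (elim disjE; simp add: TT_def tt_def mk3_def)
      next
        assume h: "b = I" "c = D" show ?thesis unfolding h LID using j7 by (elim disjE; simp add: TT_def tt_def mk3_def)
      next
        assume h: "b = I" "c = A" show ?thesis unfolding h LxA[of I, simplified] using j7 by (elim disjE; simp add: TT_def tt_def mk3_def)
      next
        assume h: "b = D" "c = I" show ?thesis unfolding h LxI[of D, simplified] using j7 by (elim disjE; simp add: TT_def tt_def mk3_def)
      next
        assume h: "b = D" "c = D" show ?thesis unfolding h LII using j7 by (elim disjE; simp add: TT_def tt_def mk3_def)
      next
        assume h: "b = D" "c = A" show ?thesis unfolding h LxA[of D, simplified] using j7 by (elim disjE; simp add: TT_def tt_def mk3_def)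
      next
        assume h: "b = A" "c = I" show ?thesis unfolding h LxI[of A, simplified] using j7 by (elim disjE; simp add: TT_def tt_def mk3_def)
      next
        assume h: "b = A" "c = D" show ?thesis unfolding h LAD using j7 by (elim disjE; simp add: TT_def tt_def mk3_def)
      next
        assume h: "b = A" "c = A" show ?thesis unfolding h LII using j7 by (elim disjE; simp add: TT_def tt_def mk3_def)
      qed
      moreover have "snd (TT j b c) = typ_of (Uf C (cx k \<psi> b) (cx k \<psi> c))" using sndTT U by simp
      ultimately show ?thesis using typf[of b c] by (metis prod.collapse)
    qed
    then show "typ_full k C \<psi> = TT j" by (intro ext)
  next
    assume H: "typ_full k C \<psi> = TT j"
    have "typ_u k C \<psi> b c = tt j b c" for b c
      using typu[of b c] typf[of b c] H sndTT[of j b c] by simp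
    then show "typ_u k C \<psi> = tt j" by (intro ext)
  qed
qed

end
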